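(* Let $M$ be a II$_1$-factor (with separable predual) acting standardly on $L^2(M)$, and let $M_k \subset M$ ($k \in \mathbb{N}$) be von Neumann subalgebras. Let $E_k : M \to M_k$ be the unique normal trace-preserving conditional expectation onto $M_k$. Then for every $x \in \liminf_{k\to\infty} M_k$, one has $E_k(x) \to x$ in the strong-$*$ topology.
   Context: For a II$_1$-factor $M$ with unique tracial state $\tau$, $L^2(M)$ is the GNS space of $\tau$ and $M \subset B(L^2(M))$ is the GNS (standard) representation. For von Neumann subalgebras $M_k \subset B(H)$, define $\liminf_{k\to\infty} M_k = \{x \in B(H) : \exists\, x_k \in M_k \text{ with } x_k \to x \text{ in the strong-}*\text{ topology}\}$. *)

theory Defs
  imports "HOL-Analysis.Analysis"
begin

text \<open>A complex Hilbert space is given on a type 'h (with its additive group structure)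
  by a complex scalar multiplication sm and an inner product ip (linear in the first
  argument, conjugate-linear in the second).\<close>

type_synonym 'h hsp = "(complex \<Rightarrow> 'h \<Rightarrow> 'h) \<times> ('h \<Rightarrow> 'h \<Rightarrow> complex)"

definition hnorm :: "'h hsp \<Rightarrow> 'h \<Rightarrow> real" where
  "hnorm S h = sqrt (Re (snd S h h))"

definition hilbert_space :: "('h::ab_group_add) hsp \<Rightarrow> bool" where
  "hilbert_space S \<longleftrightarrow> (let sm = fst S; ip = snd S in
     (\<forall>h. sm 1 h = h) \<and>
     (\<forall>a b h. sm (a * b) h = sm a (sm b h)) \<and>
     (\<forall>a b h. sm (a + b) h = sm a h + sm b h) \<and>
     (\<forall>a h g. sm a (h + g) = sm a h + sm a g) \<and>
     (\<forall>h g k. ip (h + g) k = ip h k + ip g k) \<and>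
     (\<forall>a h k. ip (sm a h) k = a * ip h k) \<and>
     (\<forall>h k. ip h k = cnj (ip k h)) \<and>
     (\<forall>h. Im (ip h h) = 0 \<and> Re (ip h h) \<ge> 0) \<and>
     (\<forall>h. ip h h = 0 \<longrightarrow> h = 0) \<and>
     (\<forall>X :: nat \<Rightarrow> 'h. (\<forall>e>0. \<exists>N. \<forall>m\<ge>N. \<forall>n\<ge>N. hnorm S (X m - X n) < e)
          \<longrightarrow> (\<exists>l. (\<lambda>n. hnorm S (X n - l)) \<longlonglongrightarrow> 0)))"

definition separable_hs :: "('h::ab_group_add) hsp \<Rightarrow> bool" where
  "separable_hs S \<longleftrightarrow> (\<exists>D. countable D \<and> (\<forall>h. \<forall>e>0. \<exists>d\<in>D. hnorm S (h - d) < e))"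

definition bounded_op :: "('h::ab_group_add) hsp \<Rightarrow> ('h \<Rightarrow> 'h) \<Rightarrow> bool" where
  "bounded_op S x \<longleftrightarrow> (\<forall>h g. x (h + g) = x h + x g) \<and> (\<forall>a h. x (fst S a h) = fst S a (x h))
     \<and> (\<exists>C. \<forall>h. hnorm S (x h) \<le> C * hnorm S h)"

definition adj :: "'h hsp \<Rightarrow> ('h \<Rightarrow> 'h) \<Rightarrow> ('h \<Rightarrow> 'h)" where
  "adj S x = (SOME y. \<forall>h g. snd S (x h) g = snd S h (y g))"

definition op_add :: "('h \<Rightarrow> 'h::ab_group_add) \<Rightarrow> ('h \<Rightarrow> 'h) \<Rightarrow> ('h \<Rightarrow> 'h)" where
  "op_add x y = (\<lambda>h. x h + y h)"

definition op_diff :: "('h \<Rightarrow> 'h::ab_group_add) \<Rightarrow> ('h \<Rightarrow> 'h) \<Rightarrow> ('h \<Rightarrow> 'h)" where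
  "op_diff x y = (\<lambda>h. x h - y h)"

definition op_smult :: "'h hsp \<Rightarrow> complex \<Rightarrow> ('h \<Rightarrow> 'h) \<Rightarrow> ('h \<Rightarrow> 'h)" where
  "op_smult S a x = (\<lambda>h. fst S a (x h))"

definition commutant :: "('h::ab_group_add) hsp \<Rightarrow> ('h \<Rightarrow> 'h) set \<Rightarrow> ('h \<Rightarrow> 'h) set" where
  "commutant S A = {y. bounded_op S y \<and> (\<forall>x\<in>A. x \<circ> y = y \<circ> x)}"

definition vN_algebra :: "('h::ab_group_add) hsp \<Rightarrow> ('h \<Rightarrow> 'h) set \<Rightarrow> bool" where
  "vN_algebra S M \<longleftrightarrow> (\<forall>x\<in>M. bounded_op S x) \<and> id \<in> M \<and>
     (\<forall>x\<in>M. \<forall>y\<in>M. op_add x y \<in> M \<and> x \<circ> y \<in> M) \<and>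
     (\<forall>a. \<forall>x\<in>M. op_smult S a x \<in> M) \<and> (\<forall>x\<in>M. adj S x \<in> M) \<and>
     M = commutant S (commutant S M)"

definition factor :: "('h::ab_group_add) hsp \<Rightarrow> ('h \<Rightarrow> 'h) set \<Rightarrow> bool" where
  "factor S M \<longleftrightarrow> M \<inter> commutant S M = {op_smult S c id | c. True}"

definition op_span :: "'h hsp \<Rightarrow> ('h \<Rightarrow> 'h::ab_group_add) set \<Rightarrow> ('h \<Rightarrow> 'h) set" where
  "op_span S F = {(\<lambda>h. \<Sum>f\<in>F. fst S (c f) (f h)) | c. True}"

definition infinite_dim :: "('h::ab_group_add) hsp \<Rightarrow> ('h \<Rightarrow> 'h) set \<Rightarrow> bool" where
  "infinite_dim S M \<longleftrightarrow> (\<forall>F. finite F \<and> F \<subseteq> M \<longrightarrow> \<not> M \<subseteq> op_span S F)"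

definition positive_op :: "('h::ab_group_add) hsp \<Rightarrow> ('h \<Rightarrow> 'h) \<Rightarrow> bool" where
  "positive_op S x \<longleftrightarrow> bounded_op S x \<and> (\<forall>h. Im (snd S (x h) h) = 0 \<and> Re (snd S (x h) h) \<ge> 0)"

definition self_adjoint :: "('h::ab_group_add) hsp \<Rightarrow> ('h \<Rightarrow> 'h) \<Rightarrow> bool" where
  "self_adjoint S x \<longleftrightarrow> bounded_op S x \<and> adj S x = x"

definition op_le :: "('h::ab_group_add) hsp \<Rightarrow> ('h \<Rightarrow> 'h) \<Rightarrow> ('h \<Rightarrow> 'h) \<Rightarrow> bool" where
  "op_le S x y \<longleftrightarrow> positive_op S (op_diff y x)"

definition is_op_sup :: "('h::ab_group_add) hsp \<Rightarrow> ('h \<Rightarrow> 'h) set \<Rightarrow> ('h \<Rightarrow> 'h) \<Rightarrow> bool" where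
  "is_op_sup S D x \<longleftrightarrow> self_adjoint S x \<and> (\<forall>d\<in>D. op_le S d x) \<and>
     (\<forall>y. self_adjoint S y \<and> (\<forall>d\<in>D. op_le S d y) \<longrightarrow> op_le S x y)"

definition incr_family :: "('h::ab_group_add) hsp \<Rightarrow> ('h \<Rightarrow> 'h) set \<Rightarrow> ('h \<Rightarrow> 'h) set \<Rightarrow> bool" where
  "incr_family S M D \<longleftrightarrow> D \<noteq> {} \<and> D \<subseteq> M \<and> (\<forall>d\<in>D. self_adjoint S d) \<and>
     (\<forall>a\<in>D. \<forall>b\<in>D. \<exists>c\<in>D. op_le S a c \<and> op_le S b c) \<and>
     (\<exists>y. self_adjoint S y \<and> (\<forall>d\<in>D. op_le S d y))"

definition state :: "('h::ab_group_add) hsp \<Rightarrow> ('h \<Rightarrow> 'h) set \<Rightarrow> (('h \<Rightarrow> 'h) \<Rightarrow> complex) \<Rightarrow> bool" where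
  "state S M \<tau> \<longleftrightarrow> (\<forall>x\<in>M. \<forall>y\<in>M. \<tau> (op_add x y) = \<tau> x + \<tau> y) \<and>
     (\<forall>a. \<forall>x\<in>M. \<tau> (op_smult S a x) = a * \<tau> x) \<and>
     (\<forall>x\<in>M. positive_op S x \<longrightarrow> Im (\<tau> x) = 0 \<and> Re (\<tau> x) \<ge> 0) \<and> \<tau> id = 1"

definition tracial :: "('h::ab_group_add) hsp \<Rightarrow> ('h \<Rightarrow> 'h) set \<Rightarrow> (('h \<Rightarrow> 'h) \<Rightarrow> complex) \<Rightarrow> bool" where
  "tracial S M \<tau> \<longleftrightarrow> (\<forall>x\<in>M. \<forall>y\<in>M. \<tau> (x \<circ> y) = \<tau> (y \<circ> x))"

definition faithful :: "('h::ab_group_add) hsp \<Rightarrow> ('h \<Rightarrow> 'h) set \<Rightarrow> (('h \<Rightarrow> 'h) \<Rightarrow> complex) \<Rightarrow> bool" where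
  "faithful S M \<tau> \<longleftrightarrow> (\<forall>x\<in>M. positive_op S x \<and> \<tau> x = 0 \<longrightarrow> x = (\<lambda>h. 0))"

definition normal_functional :: "('h::ab_group_add) hsp \<Rightarrow> ('h \<Rightarrow> 'h) set \<Rightarrow> (('h \<Rightarrow> 'h) \<Rightarrow> complex) \<Rightarrow> bool" where
  "normal_functional S M \<tau> \<longleftrightarrow> (\<forall>D x. incr_family S M D \<and> x \<in> M \<and> is_op_sup S D x \<longrightarrow>
      Re (\<tau> x) = (SUP d\<in>D. Re (\<tau> d)))"

definition normal_map :: "('h::ab_group_add) hsp \<Rightarrow> ('h \<Rightarrow> 'h) set \<Rightarrow> (('h \<Rightarrow> 'h) \<Rightarrow> ('h \<Rightarrow> 'h)) \<Rightarrow> bool" where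
  "normal_map S M E \<longleftrightarrow> (\<forall>D x. incr_family S M D \<and> x \<in> M \<and> is_op_sup S D x \<longrightarrow>
      is_op_sup S (E ` D) (E x))"

definition II1_factor :: "('h::ab_group_add) hsp \<Rightarrow> ('h \<Rightarrow> 'h) set \<Rightarrow> bool" where
  "II1_factor S M \<longleftrightarrow> vN_algebra S M \<and> factor S M \<and> infinite_dim S M \<and>
     (\<exists>\<tau>. state S M \<tau> \<and> tracial S M \<tau> \<and> faithful S M \<tau> \<and> normal_functional S M \<tau>)"

text \<open>M acts standardly, i.e. H is (unitarily) the GNS space L^2(M,tau): there is a unit
  vector xi, cyclic for M, whose vector state is tau.\<close>
definition acts_standardly :: "('h::ab_group_add) hsp \<Rightarrow> ('h \<Rightarrow> 'h) set \<Rightarrow> (('h \<Rightarrow> 'h) \<Rightarrow> complex) \<Rightarrow> bool" where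
  "acts_standardly S M \<tau> \<longleftrightarrow> (\<exists>\<xi>. hnorm S \<xi> = 1 \<and>
      (\<forall>h. \<forall>e>0. \<exists>x\<in>M. hnorm S (x \<xi> - h) < e) \<and>
      (\<forall>x\<in>M. \<tau> x = snd S (x \<xi>) \<xi>))"

definition cond_exp :: "('h::ab_group_add) hsp \<Rightarrow> ('h \<Rightarrow> 'h) set \<Rightarrow> ('h \<Rightarrow> 'h) set \<Rightarrow> (('h \<Rightarrow> 'h) \<Rightarrow> ('h \<Rightarrow> 'h)) \<Rightarrow> bool" where
  "cond_exp S M N E \<longleftrightarrow> (\<forall>x\<in>M. E x \<in> N) \<and> (\<forall>y\<in>N. E y = y) \<and>
     (\<forall>x\<in>M. \<forall>y\<in>M. E (op_add x y) = op_add (E x) (E y)) \<and>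
     (\<forall>a. \<forall>x\<in>M. E (op_smult S a x) = op_smult S a (E x)) \<and>
     (\<forall>x\<in>M. positive_op S x \<longrightarrow> positive_op S (E x)) \<and>
     (\<forall>a\<in>N. \<forall>b\<in>N. \<forall>x\<in>M. E (a \<circ> x \<circ> b) = a \<circ> E x \<circ> b)"

definition trace_preserving :: "('h \<Rightarrow> 'h) set \<Rightarrow> (('h \<Rightarrow> 'h) \<Rightarrow> complex) \<Rightarrow> (('h \<Rightarrow> 'h) \<Rightarrow> ('h \<Rightarrow> 'h)) \<Rightarrow> bool" where
  "trace_preserving M \<tau> E \<longleftrightarrow> (\<forall>x\<in>M. \<tau> (E x) = \<tau> x)"

definition strong_star_lim :: "('h::ab_group_add) hsp \<Rightarrow> (nat \<Rightarrow> ('h \<Rightarrow> 'h)) \<Rightarrow> ('h \<Rightarrow> 'h) \<Rightarrow> bool" where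
  "strong_star_lim S X x \<longleftrightarrow> (\<forall>h. (\<lambda>k. hnorm S (X k h - x h)) \<longlonglongrightarrow> 0 \<and>
       (\<lambda>k. hnorm S (adj S (X k) h - adj S x h)) \<longlonglongrightarrow> 0)"

definition liminf_alg :: "('h::ab_group_add) hsp \<Rightarrow> (nat \<Rightarrow> ('h \<Rightarrow> 'h) set) \<Rightarrow> ('h \<Rightarrow> 'h) set" where
  "liminf_alg S Ms = {x. bounded_op S x \<and> (\<exists>X. (\<forall>k. X k \<in> Ms k) \<and> strong_star_lim S X x)}"

end

theory Submission
  imports Defs
begin


locale hspace =
  fixes sm :: "complex \<Rightarrow> 'h::ab_group_add \<Rightarrow> 'h" and ip :: "'h \<Rightarrow> 'h \<Rightarrow> complex"
  assumes sm_one[simp]: "sm 1 h = h"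
    and sm_mult: "sm (a * b) h = sm a (sm b h)"
    and sm_add_left: "sm (a + b) h = sm a h + sm b h"
    and sm_add_right: "sm a (h + g) = sm a h + sm a g"
    and ip_add_left: "ip (h + g) k = ip h k + ip g k"
    and ip_sm_left: "ip (sm a h) k = a * ip h k"
    and ip_cnj: "ip h k = cnj (ip k h)"
    and ip_im: "Im (ip h h) = 0"
    and ip_re: "Re (ip h h) \<ge> 0"
    and ip_def0: "ip h h = 0 \<Longrightarrow> h = 0"
    and complete: "\<And>X :: nat \<Rightarrow> 'h. (\<forall>e>0. \<exists>N. \<forall>m\<ge>N. \<forall>n\<ge>N. hnorm (sm, ip) (X m - X n) < e)
          \<Longrightarrow> (\<exists>l. (\<lambda>n. hnorm (sm, ip) (X n - l)) \<longlonglongrightarrow> 0)"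
begin

abbreviation nrm where "nrm \<equiv> hnorm (sm, ip)"

lemma nrm_def: "nrm h = sqrt (Re (ip h h))" by (simp add: hnorm_def)

lemma sm_zero_left[simp]: "sm 0 h = 0"
proof -
  have "sm (0+0) h = sm 0 h + sm 0 h" by (rule sm_add_left)
  then show ?thesis by simp
qed

lemma sm_zero_right[simp]: "sm a 0 = 0"
proof -
  have "sm a (0+0) = sm a 0 + sm a 0" by (rule sm_add_right)
  then show ?thesis by simp
qed

lemma sm_minus_right: "sm a (- h) = - sm a h"
proof -
  have "sm a (h + - h) = sm a h + sm a (-h)" by (rule sm_add_right)
  then show ?thesis by (simp add: eq_neg_iff_add_eq_0 add.commute)
qed

lemma sm_diff_right: "sm a (h - g) = sm a h - sm a g"
  using sm_add_right[of a h "-g"] by (simp add: sm_minus_right)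

lemma sm_minus_left: "sm (- a) h = - sm a h"
proof -
  have "sm (a + - a) h = sm a h + sm (-a) h" by (rule sm_add_left)
  then show ?thesis by (simp add: eq_neg_iff_add_eq_0 add.commute)
qed

lemma sm_diff_left: "sm (a - b) h = sm a h - sm b h"
  using sm_add_left[of a "-b" h] by (simp add: sm_minus_left)

lemma sm_neg1[simp]: "sm (-1) h = - h"
  by (simp add: sm_minus_left)

lemma ip_zero_left[simp]: "ip 0 k = 0"
  using ip_add_left[of 0 0 k] by simp

lemma ip_minus_left: "ip (- h) k = - ip h k"
  using ip_add_left[of h "-h" k] by (simp add: eq_neg_iff_add_eq_0 add.commute)

lemma ip_diff_left: "ip (h - g) k = ip h k - ip g k"
  using ip_add_left[of h "-g" k] by (simp add: ip_minus_left)

lemma ip_add_right: "ip h (g + k) = ip h g + ip h k"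
  by (metis complex_cnj_add ip_add_left ip_cnj)

lemma ip_sm_right: "ip h (sm a k) = cnj a * ip h k"
  by (metis complex_cnj_mult ip_cnj ip_sm_left)

lemma ip_zero_right[simp]: "ip h 0 = 0"
  by (metis complex_cnj_zero ip_cnj ip_zero_left)

lemma ip_minus_right: "ip h (- k) = - ip h k"
  by (metis complex_cnj_minus ip_cnj ip_minus_left)

lemma ip_diff_right: "ip h (g - k) = ip h g - ip h k"
  by (metis complex_cnj_diff ip_cnj ip_diff_left)

lemmas ip_simps = ip_add_left ip_add_right ip_diff_left ip_diff_right ip_minus_left ip_minus_right
  ip_sm_left ip_sm_right

lemma nrm_nonneg[simp]: "nrm h \<ge> 0" by (simp add: nrm_def ip_re)

lemma nrm_sq: "(nrm h)^2 = Re (ip h h)" by (simp add: nrm_def ip_re)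

lemma ip_self: "ip h h = complex_of_real ((nrm h)^2)"
  by (simp add: nrm_sq complex_eq_iff ip_im)

lemma nrm_zero_iff[simp]: "nrm h = 0 \<longleftrightarrow> h = 0"
proof
  assume "nrm h = 0" then have "ip h h = 0" by (simp add: ip_self)
  then show "h = 0" by (rule ip_def0)
qed (simp add: nrm_def)

lemma nrm_zero[simp]: "nrm 0 = 0" by simp

lemma ip_expand: "ip (h - sm t g) (h - sm t g) = ip h h - cnj t * ip h g - t * ip g h + t * cnj t * ip g g"
  by (simp add: ip_simps algebra_simps)

lemma proj_lemma:
  assumes "g \<noteq> 0"
  shows "Re (ip (h - sm (ip h g / ip g g) g) (h - sm (ip h g / ip g g) g)) = (nrm h)^2 - (cmod (ip h g))^2 / (nrm g)^2"
proof -
  define b where "b = (nrm g)^2"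
  have b: "b > 0" using assms by (simp add: b_def)
  have gg: "ip g g = complex_of_real b" by (simp add: b_def ip_self)
  define \<alpha> where "\<alpha> = ip h g"
  have gh: "ip g h = cnj \<alpha>" unfolding \<alpha>_def by (rule ip_cnj)
  define t where "t = \<alpha> / complex_of_real b"
  have bc: "complex_of_real b \<noteq> 0" using b by simp
  have ct: "cnj t = cnj \<alpha> / complex_of_real b" by (simp add: t_def)
  have e1: "cnj t * \<alpha> = \<alpha> * cnj \<alpha> / of_real b" unfolding ct by (simp add: mult.commute)
  have e2: "t * cnj \<alpha> = \<alpha> * cnj \<alpha> / of_real b" unfolding t_def by (rule times_divide_eq_left)
  have e3: "t * cnj t * of_real b = \<alpha> * cnj \<alpha> / of_real b" using bc
    unfolding ct unfolding t_def by (simp add: field_simps power2_eq_square)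
  have X: "ip (h - sm t g) (h - sm t g) = ip h h - \<alpha> * cnj \<alpha> / of_real b"
    unfolding ip_expand gh gg \<alpha>_def[symmetric] e1 e2 e3 by simp
  have Y: "\<alpha> * cnj \<alpha> = of_real ((cmod \<alpha>)^2)" by (metis complex_norm_square of_real_power)
  have Z: "ip h g / ip g g = t" unfolding t_def \<alpha>_def gg ..
  have W: "Re (ip h h - \<alpha> * cnj \<alpha> / of_real b) = (nrm h)^2 - (cmod \<alpha>)^2 / b"
    unfolding Y nrm_sq by (metis Re_complex_of_real minus_complex.sel of_real_divide)
  show ?thesis apply (simp only: Z X W) by (simp only: \<alpha>_def b_def)
qed

lemma cauchy_schwarz: "cmod (ip h g) \<le> nrm h * nrm g"
proof (cases "g = 0")
  case False
  have "0 \<le> Re (ip (h - sm (ip h g / ip g g) g) (h - sm (ip h g / ip g g) g))" by (rule ip_re)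
  then have "(cmod (ip h g))^2 / (nrm g)^2 \<le> (nrm h)^2" using proj_lemma[OF False] by simp
  then have "(cmod (ip h g))^2 \<le> (nrm h * nrm g)^2" using False
    by (simp add: power_mult_distrib pos_divide_le_eq)
  then show ?thesis by (simp add: power_mono_iff abs_le_square_iff)
qed simp

lemma nrm_sq_add: "(nrm (h + g))^2 = (nrm h)^2 + (nrm g)^2 + 2 * Re (ip h g)"
proof -
  have "ip g h = cnj (ip h g)" by (rule ip_cnj)
  then show ?thesis by (simp add: nrm_sq ip_simps)
qed

lemma nrm_triangle: "nrm (h + g) \<le> nrm h + nrm g"
proof -
  have "Re (ip h g) \<le> nrm h * nrm g"
    using cauchy_schwarz[of h g] complex_Re_le_cmod[of "ip h g"] by linarith
  then have "(nrm (h + g))^2 \<le> (nrm h + nrm g)^2" by (simp add: nrm_sq_add power2_sum)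
  then show ?thesis by (simp add: power_mono_iff abs_le_square_iff)
qed

lemma nrm_sm: "nrm (sm a h) = cmod a * nrm h"
proof -
  have "(nrm (sm a h))^2 = (cmod a * nrm h)^2"
    proof -
    have ca: "a * cnj a = of_real ((cmod a)^2)"
      by (rule complex_norm_square[symmetric])
    have "ip (sm a h) (sm a h) = a * cnj a * ip h h" by (simp only: ip_sm_left ip_sm_right mult.assoc mult.left_commute)
    then have "ip (sm a h) (sm a h) = of_real ((cmod a)^2) * ip h h" unfolding ca .
    then show ?thesis by (simp add: nrm_sq power_mult_distrib)
  qed
  then show ?thesis by (simp add: power2_eq_iff_nonneg)
qed

lemma nrm_minus: "nrm (- h) = nrm h"
  using nrm_sm[of "-1" h] by simp

lemma nrm_commute: "nrm (h - g) = nrm (g - h)"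
  by (metis minus_diff_eq nrm_minus)

lemma nrm_diff_triangle: "nrm (h - g) \<le> nrm (h - k) + nrm (k - g)"
  using nrm_triangle[of "h - k" "k - g"] by simp

lemma nrm_diff_le: "nrm (h - g) \<le> nrm h + nrm g"
  using nrm_triangle[of h "- g"] by (simp add: nrm_minus)

end


context hspace begin

lemma nrm_sq_diff: "(nrm (h - g))^2 = (nrm h)^2 + (nrm g)^2 - 2 * Re (ip h g)"
  using nrm_sq_add[of h "- g"] by (simp add: nrm_minus ip_minus_right)

lemma parallelogram: "(nrm (h + g))^2 + (nrm (h - g))^2 = 2 * (nrm h)^2 + 2 * (nrm g)^2"
  by (simp add: nrm_sq_add nrm_sq_diff)

lemma sm_half: "sm (1/2) w + sm (1/2) w = w"
  using sm_add_left[of "1/2" "1/2" w, symmetric] by simp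

lemma riesz:
  assumes add: "\<And>h g. f (h + g) = f h + f g" and hom: "\<And>a h. f (sm a h) = a * f h"
    and bnd: "\<And>h. cmod (f h) \<le> C * nrm h"
  shows "\<exists>z. \<forall>h. f h = ip h z"
proof (cases "\<forall>h. f h = 0")
  case True then show ?thesis by (intro exI[of _ 0]) simp
next
  case False
  then obtain u where fu: "f u \<noteq> 0" by auto
  have f0: "f 0 = 0" using add[of 0 0] by simp
  have fdiff: "f (h - g) = f h - f g" for h g
    using add[of "h - g" g] by simp
  define K where "K = {k. f k = 0}"
  have K0: "0 \<in> K" using f0 by (simp add: K_def)
  define d where "d = Inf ((\<lambda>k. nrm (u - k)) ` K)"
  have bdd: "bdd_below ((\<lambda>k. nrm (u - k)) ` K)"
    by (rule bdd_belowI[of _ 0]) auto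
  have dle: "d \<le> nrm (u - k)" if "k \<in> K" for k
    unfolding d_def using bdd that by (rule cINF_lower)
  have d0: "d \<ge> 0" unfolding d_def using K0 by (intro cINF_greatest) auto
  have dex: "\<exists>k\<in>K. nrm (u - k) < d + e" if "e > 0" for e
  proof -
    have "Inf ((\<lambda>k. nrm (u - k)) ` K) < d + e" using that d_def by simp
    then show ?thesis using cInf_less_iff[OF _ bdd] K0 by auto
  qed
  define e :: "nat \<Rightarrow> real" where "e n = inverse (real (Suc n))" for n
  have e_pos: "e n > 0" for n by (simp add: e_def)
  have e_le1: "e n \<le> 1" for n by (simp add: e_def inverse_le_1_iff)
  have "\<forall>n. \<exists>k. k \<in> K \<and> nrm (u - k) < d + e n" using dex e_pos by blast
  then obtain ks where ks: "\<And>n. ks n \<in> K" "\<And>n. nrm (u - ks n) < d + e n" by metis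
  have Kadd: "a + b \<in> K" if "a \<in> K" "b \<in> K" for a b using that add by (simp add: K_def)
  have Ksm: "sm c a \<in> K" if "a \<in> K" for a c using that hom by (simp add: K_def)
  have Kdiff: "a - b \<in> K" if "a \<in> K" "b \<in> K" for a b using that fdiff by (simp add: K_def)
  have cauchy_est: "(nrm (ks m - ks n))^2 \<le> (4 * d + 2) * (e m + e n)" for m n
  proof -
    define a where "a = u - ks m"
    define b where "b = u - ks n"
    define mid where "mid = sm (1/2) (ks m + ks n)"
    have midK: "mid \<in> K" unfolding mid_def using ks(1) by (intro Ksm Kadd)
    have ab: "a + b = (u - mid) + (u - mid)"
      using sm_half[of "ks m + ks n"] unfolding a_def b_def mid_def by (simp add: algebra_simps)
    have U: "(nrm (a + b))^2 = 4 * (nrm (u - mid))^2"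
      unfolding ab nrm_sq_add by (simp add: nrm_sq)
    have D: "d^2 \<le> (nrm (u - mid))^2" using dle[OF midK] d0 by (simp add: power_mono)
    have AB: "a - b = ks n - ks m" unfolding a_def b_def by simp
    have C: "nrm (ks n - ks m) = nrm (ks m - ks n)" by (rule nrm_commute)
    have A: "(nrm a)^2 \<le> (d + e m)^2" unfolding a_def using ks(2)[of m] by (simp add: power_mono)
    have B: "(nrm b)^2 \<le> (d + e n)^2" unfolding b_def using ks(2)[of n] by (simp add: power_mono)
    have E: "e m ^2 \<le> e m" "e n ^2 \<le> e n" using e_le1 e_pos
      by (simp_all add: power2_eq_square mult_le_cancel_right1 less_imp_le)
    have S1: "(d + e m)^2 = d^2 + 2 * d * e m + (e m)^2" "(d + e n)^2 = d^2 + 2 * d * e n + (e n)^2"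
      by (simp_all add: power2_sum)
    have S2: "(4 * d + 2) * (e m + e n) = 4 * d * e m + 4 * d * e n + 2 * e m + 2 * e n"
      by (simp add: algebra_simps)
    have P: "(nrm (a + b))^2 + (nrm (a - b))^2 = 2 * (nrm a)^2 + 2 * (nrm b)^2" by (rule parallelogram)
    show ?thesis unfolding S2 using P U D A B E S1 unfolding AB C by linarith
  qed
  have "\<exists>p. (\<lambda>n. nrm (ks n - p)) \<longlonglongrightarrow> 0"
  proof (rule complete, intro allI impI)
    fix \<epsilon> :: real assume eps: "\<epsilon> > 0"
    obtain N0 :: nat where N0: "(4 * d + 2) * 2 / \<epsilon>^2 < real N0"
      using reals_Archimedean2 by blast
    define N where "N = N0"
    have N: "(4 * d + 2) * 2 / \<epsilon>^2 < real (Suc N)" using N0 unfolding N_def by simp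
    have eps2: "\<epsilon>^2 > 0" using eps by simp
    have SN: "real (Suc N) > 0" by simp
    have "(4 * d + 2) * 2 < real (Suc N) * \<epsilon>^2" using N eps2 by (simp add: pos_divide_less_eq)
    then have Nb: "(4 * d + 2) * (2 * inverse (real (Suc N))) < \<epsilon>^2" using SN
      by (simp add: divide_less_eq divide_inverse[symmetric] mult.commute)
    show "\<exists>N. \<forall>m\<ge>N. \<forall>n\<ge>N. nrm (ks m - ks n) < \<epsilon>"
    proof (intro exI allI impI)
      fix m n assume mn: "m \<ge> N" "n \<ge> N"
      have "e m \<le> inverse (real (Suc N))" "e n \<le> inverse (real (Suc N))"
        using mn by (simp_all add: e_def le_imp_inverse_le)
      then have "e m + e n \<le> 2 * inverse (real (Suc N))" by linarith
      then have "(4 * d + 2) * (e m + e n) \<le> (4 * d + 2) * (2 * inverse (real (Suc N)))"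
        using d0 by (intro mult_left_mono) auto
      then have "(nrm (ks m - ks n))^2 < \<epsilon>^2"
        using cauchy_est[of m n] Nb by linarith
      then show "nrm (ks m - ks n) < \<epsilon>" using eps by (simp add: power_less_imp_less_base less_imp_le)
    qed
  qed
  then obtain p where p: "(\<lambda>n. nrm (ks n - p)) \<longlonglongrightarrow> 0" by blast
  have "cmod (f p) \<le> 0"
  proof (rule LIMSEQ_le_const)
    show "(\<lambda>n. C * nrm (ks n - p)) \<longlonglongrightarrow> 0" using tendsto_mult_right_zero[OF p] by simp
    show "\<exists>N. \<forall>n\<ge>N. cmod (f p) \<le> C * nrm (ks n - p)"
    proof (intro exI allI impI)
      fix n
      have "f p = - f (ks n - p)" using fdiff[of "ks n" p] ks(1)[of n] by (simp add: K_def)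
      then have "cmod (f p) = cmod (f (ks n - p))" by simp
      then show "cmod (f p) \<le> C * nrm (ks n - p)" using bnd by simp
    qed
  qed
  then have pK: "p \<in> K" by (simp add: K_def)
  define w where "w = u - p"
  have "nrm w \<le> d"
  proof (rule LIMSEQ_le_const)
    show "(\<lambda>n. d + e n + nrm (ks n - p)) \<longlonglongrightarrow> d"
      using tendsto_add[OF tendsto_add[OF tendsto_const LIMSEQ_inverse_real_of_nat] p]
      by (simp add: e_def)
    show "\<exists>N. \<forall>n\<ge>N. nrm w \<le> d + e n + nrm (ks n - p)"
      using ks(2) nrm_diff_triangle[of u p] unfolding w_def
      by (meson add_le_cancel_right less_imp_le order_trans)
  qed
  have wmin: "nrm w \<le> nrm (w - k)" if "k \<in> K" for k
  proof -
    have "w - k = u - (p + k)" unfolding w_def by simp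
    then have "nrm (w - k) = nrm (u - (p + k))" by (rule arg_cong)
    then show ?thesis using dle[OF Kadd[OF pK that]] \<open>nrm w \<le> d\<close> by linarith
  qed
  have orth: "ip w k = 0" if kK: "k \<in> K" for k
  proof (cases "k = 0")
    case False
    have "nrm w \<le> nrm (w - sm (ip w k / ip k k) k)" by (rule wmin[OF Ksm[OF kK]])
    then have "(nrm w)^2 \<le> (nrm (w - sm (ip w k / ip k k) k))^2" by (simp add: power_mono)
    also have "\<dots> = (nrm w)^2 - (cmod (ip w k))^2 / (nrm k)^2"
      using proj_lemma[OF False, of w] unfolding nrm_sq by simp
    finally have "(cmod (ip w k))^2 / (nrm k)^2 \<le> 0" by simp
    then have "(cmod (ip w k))^2 \<le> 0" using False by (simp add: divide_le_0_iff)
    then show ?thesis by simp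
  qed simp
  have fw: "f w = f u" using fdiff[of u p] pK by (simp add: w_def K_def)
  have w0: "w \<noteq> 0" using fw fu f0 by auto
  have ww: "ip w w \<noteq> 0" using w0 ip_def0 by blast
  have key: "ip h w = f h / f w * ip w w" for h
  proof -
    define v where "v = h - sm (f h / f w) w"
    have "f v = 0" unfolding v_def fdiff hom using fw fu by simp
    then have "ip w v = 0" using orth by (simp add: K_def)
    then have "ip v w = 0" using ip_cnj[of v w] by simp
    then show ?thesis unfolding v_def by (simp add: ip_diff_left ip_sm_left)
  qed
  show ?thesis
  proof (intro exI allI)
    fix h
    have "ip h (sm (cnj (f w / ip w w)) w) = f w / ip w w * (f h / f w * ip w w)"
      unfolding ip_sm_right key[of h] complex_cnj_cnj ..
    also have "\<dots> = f h" using ww fw fu by simp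
    finally show "f h = ip h (sm (cnj (f w / ip w w)) w)" by simp
  qed
qed

end


context hspace begin

abbreviation bop where "bop \<equiv> bounded_op (sm, ip)"
abbreviation adjo where "adjo \<equiv> adj (sm, ip)"

lemma nrm_pos[simp]: "nrm h > 0 \<longleftrightarrow> h \<noteq> 0"
  using nrm_nonneg[of h] nrm_zero_iff[of h] by linarith

lemma bop_add: "bop x \<Longrightarrow> x (h + g) = x h + x g" by (simp add: bounded_op_def)
lemma bop_sm: "bop x \<Longrightarrow> x (sm a h) = sm a (x h)" by (simp add: bounded_op_def)
lemma bop_zero: "bop x \<Longrightarrow> x 0 = 0" using bop_add[of x 0 0] by simp
lemma bop_diff: "bop x \<Longrightarrow> x (h - g) = x h - x g" using bop_add[of x "h - g" g] by simp
lemma bop_bound: "bop x \<Longrightarrow> \<exists>C\<ge>0. \<forall>h. nrm (x h) \<le> C * nrm h"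
proof -
  assume "bop x"
  then obtain C where C: "\<forall>h. nrm (x h) \<le> C * nrm h" by (auto simp: bounded_op_def)
  have "nrm (x h) \<le> max C 0 * nrm h" for h
    using C[rule_format, of h] by (meson max.cobounded1 mult_right_mono nrm_nonneg order_trans)
  then show ?thesis by (intro exI[of _ "max C 0"]) auto
qed

lemma adj_exists: assumes "bop x" shows "\<exists>y. \<forall>h g. ip (x h) g = ip h (y g)"
proof -
  obtain C where C: "\<forall>h. nrm (x h) \<le> C * nrm h" using assms by (auto simp: bounded_op_def)
  have "\<exists>z. \<forall>h. ip (x h) g = ip h z" for g
  proof (rule riesz)
    show "ip (x (h + h')) g = ip (x h) g + ip (x h') g" for h h'
      using assms by (simp add: bop_add ip_add_left)
    show "ip (x (sm a h)) g = a * ip (x h) g" for a h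
      using assms by (simp add: bop_sm ip_sm_left)
    show "cmod (ip (x h) g) \<le> (C * nrm g) * nrm h" for h
    proof -
      have "cmod (ip (x h) g) \<le> nrm (x h) * nrm g" by (rule cauchy_schwarz)
      also have "\<dots> \<le> (C * nrm h) * nrm g" using C by (simp add: mult_right_mono)
      finally show ?thesis by (simp add: algebra_simps)
    qed
  qed
  then show ?thesis by metis
qed

lemma adj_prop: assumes "bop x" shows "ip (x h) g = ip h (adjo x g)"
proof -
  have "\<forall>h g. ip (x h) g = ip h (adjo x g)"
    unfolding adj_def snd_conv using someI_ex[OF adj_exists[OF assms]] by blast
  then show ?thesis by blast
qed

lemma adj_left: assumes "bop x" shows "ip (adjo x g) h = ip g (x h)"
  by (metis adj_prop assms ip_cnj)

lemma adj_eq: assumes y: "\<And>h g. ip (x h) g = ip h (y g)" shows "adjo x = y"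
proof
  fix g
  have P: "\<forall>h g. ip (x h) g = ip h (adjo x g)"
    unfolding adj_def snd_conv by (rule someI[of _ y]) (simp add: y)
  have "ip h (adjo x g - y g) = 0" for h using P y by (simp add: ip_diff_right)
  then have "ip (adjo x g - y g) (adjo x g - y g) = 0" by blast
  then have "adjo x g - y g = 0" by (rule ip_def0)
  then show "adjo x g = y g" by simp
qed

lemma adj_adj: assumes "bop x" shows "adjo (adjo x) = x"
  by (rule adj_eq) (rule adj_left[OF assms])

lemma adj_comp: assumes "bop a" "bop b" shows "adjo (a \<circ> b) = adjo b \<circ> adjo a"
  by (rule adj_eq) (simp add: adj_prop[OF assms(1)] adj_prop[OF assms(2)])

lemma adj_diff: assumes "bop a" "bop b" shows "adjo (op_diff a b) = op_diff (adjo a) (adjo b)"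
  by (rule adj_eq) (simp add: op_diff_def ip_diff_left ip_diff_right adj_prop[OF assms(1)] adj_prop[OF assms(2)])

lemma adj_bound: assumes "bop x" "C \<ge> 0" "\<And>h. nrm (x h) \<le> C * nrm h"
  shows "nrm (adjo x h) \<le> C * nrm h"
proof (cases "adjo x h = 0")
  case True then show ?thesis using assms(2) by simp
next
  case False
  define u where "u = adjo x h"
  have "(nrm u)^2 = Re (ip (x u) h)" unfolding nrm_sq u_def adj_prop[OF assms(1)] ..
  also have "\<dots> \<le> cmod (ip (x u) h)" by (rule complex_Re_le_cmod)
  also have "\<dots> \<le> nrm (x u) * nrm h" by (rule cauchy_schwarz)
  also have "\<dots> \<le> (C * nrm u) * nrm h" using assms(3) by (simp add: mult_right_mono)
  finally have "nrm u * nrm u \<le> nrm u * (C * nrm h)" by (simp add: power2_eq_square algebra_simps)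
  moreover have "nrm u > 0" using False u_def by simp
  ultimately show ?thesis unfolding u_def[symmetric] by simp
qed

lemma polar_bound:
  assumes add: "\<And>h g. T (h + g) = T h + T g" and hom: "\<And>a h. T (sm a h) = sm a (T h)"
    and q: "\<And>v. cmod (ip (T v) v) \<le> c * (nrm v)^2" and c: "c \<ge> 0"
  shows "nrm (T h) \<le> 4 * c * nrm h"
proof -
  have Tdiff: "T (h - g) = T h - T g" for h g using add[of "h - g" g] by simp
  have T0: "T 0 = 0" using add[of 0 0] by simp
  have ident: "4 * ip (T h) g = (ip (T (h + g)) (h + g) - ip (T (h - g)) (h - g))
     + \<i> * (ip (T (h + sm \<i> g)) (h + sm \<i> g) - ip (T (h - sm \<i> g)) (h - sm \<i> g))" for h g
    by (simp add: add Tdiff hom ip_simps algebra_simps)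
  have bnd: "cmod (ip (T h) g) \<le> c * (nrm h + nrm g)^2" for h g
  proof -
    have n1: "nrm (h + g) \<le> nrm h + nrm g" "nrm (h - g) \<le> nrm h + nrm g"
      "nrm (h + sm \<i> g) \<le> nrm h + nrm g" "nrm (h - sm \<i> g) \<le> nrm h + nrm g"
      using nrm_triangle[of h g] nrm_diff_le[of h g] nrm_triangle[of h "sm \<i> g"] nrm_diff_le[of h "sm \<i> g"]
      by (simp_all add: nrm_sm)
    have qb: "cmod (ip (T v) v) \<le> c * (nrm h + nrm g)^2" if "nrm v \<le> nrm h + nrm g" for v
    proof -
      have "(nrm v)^2 \<le> (nrm h + nrm g)^2" using that by (simp add: power_mono)
      then show ?thesis using q[of v] c by (meson mult_left_mono order_trans)
    qed
    have "cmod (4 * ip (T h) g) \<le> cmod (ip (T (h + g)) (h + g)) + cmod (ip (T (h - g)) (h - g))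
       + (cmod (ip (T (h + sm \<i> g)) (h + sm \<i> g)) + cmod (ip (T (h - sm \<i> g)) (h - sm \<i> g)))"
      unfolding ident
    proof -
      let ?A = "ip (T (h + g)) (h + g)" and ?B = "ip (T (h - g)) (h - g)"
      let ?C = "ip (T (h + sm \<i> g)) (h + sm \<i> g)" and ?D = "ip (T (h - sm \<i> g)) (h - sm \<i> g)"
      have "cmod (?A - ?B + \<i> * (?C - ?D)) \<le> cmod (?A - ?B) + cmod (\<i> * (?C - ?D))"
        by (rule norm_triangle_ineq)
      also have "cmod (\<i> * (?C - ?D)) = cmod (?C - ?D)" by (simp add: norm_mult)
      finally show "cmod (?A - ?B + \<i> * (?C - ?D)) \<le> cmod ?A + cmod ?B + (cmod ?C + cmod ?D)"
        using norm_triangle_ineq4[of ?A ?B] norm_triangle_ineq4[of ?C ?D] by linarith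
    qed
    also have "\<dots> \<le> 4 * (c * (nrm h + nrm g)^2)" using qb[OF n1(1)] qb[OF n1(2)] qb[OF n1(3)] qb[OF n1(4)]
      by linarith
    finally show ?thesis by (simp add: norm_mult)
  qed
  show ?thesis
  proof (cases "T h = 0")
    case True then show ?thesis using c by simp
  next
    case False
    define s where "s = nrm h / nrm (T h)"
    define g where "g = sm (of_real s) (T h)"
    have nTh: "nrm (T h) > 0" using False by simp
    have s0: "s \<ge> 0" unfolding s_def by simp
    have ng: "nrm g = nrm h" unfolding g_def nrm_sm norm_of_real using nTh s0 by (simp add: s_def)
    have "ip (T h) g = of_real s * ip (T h) (T h)" unfolding g_def ip_sm_right by simp
    also have "\<dots> = of_real (nrm h * nrm (T h))" unfolding ip_self s_def using nTh
      by (simp add: power2_eq_square)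
    finally have "nrm h * nrm (T h) \<le> c * (nrm h + nrm h)^2" using bnd[of h g] ng
      by (simp del: of_real_mult add: of_real_mult[symmetric] abs_mult)
    then have "nrm h * nrm (T h) \<le> nrm h * (4 * c * nrm h)" by (simp add: power2_eq_square algebra_simps)
    moreover have "h \<noteq> 0" using False T0 by auto
    ultimately show "nrm (T h) \<le> 4 * c * nrm h" by simp
  qed
qed

end



locale stdf = hspace sm ip for sm :: "complex \<Rightarrow> 'h::ab_group_add \<Rightarrow> 'h" and ip +
  fixes M :: "('h \<Rightarrow> 'h) set" and \<tau> :: "('h \<Rightarrow> 'h) \<Rightarrow> complex" and \<xi> :: 'h
  assumes vM: "vN_algebra (sm, ip) M"
    and tr: "tracial (sm, ip) M \<tau>"
    and tx: "\<And>m. m \<in> M \<Longrightarrow> \<tau> m = ip (m \<xi>) \<xi>"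
    and dense: "\<And>h e. e > 0 \<Longrightarrow> \<exists>m\<in>M. nrm (m \<xi> - h) < e"
begin

lemma vN_bop: "vN_algebra (sm, ip) A \<Longrightarrow> y \<in> A \<Longrightarrow> bop y"
  by (simp add: vN_algebra_def)
lemma vN_id: "vN_algebra (sm, ip) A \<Longrightarrow> id \<in> A"
  by (simp add: vN_algebra_def)
lemma vN_add: "vN_algebra (sm, ip) A \<Longrightarrow> a \<in> A \<Longrightarrow> b \<in> A \<Longrightarrow> op_add a b \<in> A"
  by (simp add: vN_algebra_def)
lemma vN_comp: "vN_algebra (sm, ip) A \<Longrightarrow> a \<in> A \<Longrightarrow> b \<in> A \<Longrightarrow> a \<circ> b \<in> A"
  by (simp add: vN_algebra_def)
lemma vN_smult: "vN_algebra (sm, ip) A \<Longrightarrow> a \<in> A \<Longrightarrow> op_smult (sm, ip) c a \<in> A"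
  by (simp add: vN_algebra_def)
lemma vN_adj: "vN_algebra (sm, ip) A \<Longrightarrow> a \<in> A \<Longrightarrow> adjo a \<in> A"
  by (simp add: vN_algebra_def)
lemma op_diff_eq: "op_diff a b = op_add a (op_smult (sm, ip) (-1) b)"
  by (simp add: op_diff_def op_add_def op_smult_def fun_eq_iff)
lemma vN_diff: "vN_algebra (sm, ip) A \<Longrightarrow> a \<in> A \<Longrightarrow> b \<in> A \<Longrightarrow> op_diff a b \<in> A"
  unfolding op_diff_eq by (intro vN_add vN_smult)

lemma mbop: "m \<in> M \<Longrightarrow> bop m" using vN_bop[OF vM] .

lemma trace_norm: assumes b: "b \<in> M" shows "nrm (b \<xi>) = nrm (adjo b \<xi>)"
proof -
  have ab: "adjo b \<in> M" by (rule vN_adj[OF vM b])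
  have "\<tau> (adjo b \<circ> b) = \<tau> (b \<circ> adjo b)" using tr ab b by (simp add: tracial_def)
  then have "ip (adjo b (b \<xi>)) \<xi> = ip (b (adjo b \<xi>)) \<xi>"
    using tx vN_comp[OF vM ab b] vN_comp[OF vM b ab] by simp
  then have "ip (b \<xi>) (b \<xi>) = ip (adjo b \<xi>) (adjo b \<xi>)"
    by (simp add: adj_left[OF mbop[OF b]] adj_prop[OF mbop[OF b]])
  then show ?thesis by (simp add: nrm_def)
qed

lemma conv1:
  assumes Z: "\<And>k. Z k \<in> M" and C: "C \<ge> 0" and Zb: "\<And>k h. nrm (Z k h) \<le> C * nrm h"
    and lim: "(\<lambda>k. nrm (adjo (Z k) \<xi>)) \<longlonglongrightarrow> 0"
  shows "(\<lambda>k. nrm (Z k h)) \<longlonglongrightarrow> 0"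
  unfolding LIMSEQ_iff
proof (intro allI impI)
  fix \<epsilon> :: real assume eps: "\<epsilon> > 0"
  have "\<epsilon> / (2 * (C + 1)) > 0" using eps C by simp
  then obtain m where m: "m \<in> M" "nrm (m \<xi> - h) < \<epsilon> / (2 * (C + 1))" using dense by blast
  obtain Cm where Cm: "Cm \<ge> 0" "\<And>h. nrm (m h) \<le> Cm * nrm h" using bop_bound[OF mbop[OF m(1)]] by blast
  have Cma: "nrm (adjo m h) \<le> Cm * nrm h" for h by (rule adj_bound[OF mbop[OF m(1)] Cm])
  have "\<epsilon> / (2 * (Cm + 1)) > 0" using eps Cm by simp
  then obtain N where N: "\<And>k. k \<ge> N \<Longrightarrow> nrm (adjo (Z k) \<xi>) < \<epsilon> / (2 * (Cm + 1))"
    using lim unfolding LIMSEQ_iff by fastforce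
  show "\<exists>N. \<forall>k\<ge>N. norm (nrm (Z k h) - 0) < \<epsilon>"
  proof (intro exI allI impI)
    fix k assume k: "k \<ge> N"
    have Zm: "Z k \<circ> m \<in> M" by (rule vN_comp[OF vM Z m(1)])
    have "nrm (Z k (m \<xi>)) = nrm (adjo (Z k \<circ> m) \<xi>)" using trace_norm[OF Zm] by simp
    also have "\<dots> = nrm (adjo m (adjo (Z k) \<xi>))"
      by (simp add: adj_comp[OF mbop[OF Z] mbop[OF m(1)]])
    also have "\<dots> \<le> Cm * nrm (adjo (Z k) \<xi>)" by (rule Cma)
    also have "\<dots> \<le> Cm * (\<epsilon> / (2 * (Cm + 1)))" using N[OF k] Cm(1) by (intro mult_left_mono) auto
    also have "\<dots> \<le> \<epsilon> / 2" using Cm(1) eps by (simp add: field_simps)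
    finally have A: "nrm (Z k (m \<xi>)) \<le> \<epsilon> / 2" .
    have "nrm (Z k h - Z k (m \<xi>)) = nrm (Z k (h - m \<xi>))" by (simp add: bop_diff[OF mbop[OF Z]])
    also have "\<dots> \<le> C * nrm (h - m \<xi>)" by (rule Zb)
    also have "\<dots> \<le> C * (\<epsilon> / (2 * (C + 1)))" using m(2) C nrm_commute[of h "m \<xi>"]
      by (intro mult_left_mono) auto
    also have "\<dots> < \<epsilon> / 2" using C eps by (simp add: field_simps)
    finally have B: "nrm (Z k h - Z k (m \<xi>)) < \<epsilon> / 2" .
    have "nrm (Z k h) \<le> nrm (Z k h - Z k (m \<xi>)) + nrm (Z k (m \<xi>))"
      using nrm_triangle[of "Z k h - Z k (m \<xi>)" "Z k (m \<xi>)"] by simp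
    then show "norm (nrm (Z k h) - 0) < \<epsilon>" using A B by simp
  qed
qed

end


context stdf begin

lemma ce_facts:
  assumes ce: "cond_exp (sm, ip) M N E"
  shows "\<And>y. y \<in> M \<Longrightarrow> E y \<in> N" "\<And>y. y \<in> N \<Longrightarrow> E y = y"
    "\<And>a b. a \<in> M \<Longrightarrow> b \<in> M \<Longrightarrow> E (op_add a b) = op_add (E a) (E b)"
    "\<And>c a. a \<in> M \<Longrightarrow> E (op_smult (sm, ip) c a) = op_smult (sm, ip) c (E a)"
    "\<And>a. a \<in> M \<Longrightarrow> positive_op (sm, ip) a \<Longrightarrow> positive_op (sm, ip) (E a)"
    "\<And>a b y. a \<in> N \<Longrightarrow> b \<in> N \<Longrightarrow> y \<in> M \<Longrightarrow> E (a \<circ> y \<circ> b) = a \<circ> E y \<circ> b"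
  using ce unfolding cond_exp_def by blast+

lemma E_diff:
  assumes ce: "cond_exp (sm, ip) M N E" and a: "a \<in> M" and b: "b \<in> M"
  shows "E (op_diff a b) = op_diff (E a) (E b)"
  unfolding op_diff_eq
  by (simp add: ce_facts(3)[OF ce a vN_smult[OF vM b]] ce_facts(4)[OF ce b])

lemma E_2norm:
  assumes vN: "vN_algebra (sm, ip) N" and NM: "N \<subseteq> M" and ce: "cond_exp (sm, ip) M N E"
    and tp: "trace_preserving M \<tau> E" and y: "y \<in> M"
  shows "nrm (E y \<xi>) \<le> nrm (y \<xi>)"
proof -
  define e where "e = E y"
  have eN: "e \<in> N" unfolding e_def by (rule ce_facts(1)[OF ce y])
  have eb: "bop e" using vN_bop[OF vN eN] .
  have aeN: "adjo e \<in> N" by (rule vN_adj[OF vN eN])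
  have aeM: "adjo e \<in> M" using aeN NM by blast
  have w: "adjo e \<circ> y \<circ> id \<in> M" using vN_comp[OF vM aeM y] by simp
  have Ew: "E (adjo e \<circ> y \<circ> id) = adjo e \<circ> e \<circ> id"
    using ce_facts(6)[OF ce aeN vN_id[OF vN] y] by (simp add: e_def)
  have "\<tau> (E (adjo e \<circ> y \<circ> id)) = \<tau> (adjo e \<circ> y \<circ> id)" using tp w by (simp add: trace_preserving_def)
  moreover have "adjo e \<circ> e \<circ> id \<in> M" using vN_comp[OF vM aeM] eN NM by auto
  ultimately have "ip (adjo e (e \<xi>)) \<xi> = ip (adjo e (y \<xi>)) \<xi>"
    using tx w unfolding Ew by simp
  then have eq: "ip (e \<xi>) (e \<xi>) = ip (y \<xi>) (e \<xi>)" by (simp add: adj_left[OF eb])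
  have "(nrm (e \<xi>))^2 = Re (ip (y \<xi>) (e \<xi>))" unfolding nrm_sq eq ..
  also have "\<dots> \<le> cmod (ip (y \<xi>) (e \<xi>))" by (rule complex_Re_le_cmod)
  also have "\<dots> \<le> nrm (y \<xi>) * nrm (e \<xi>)" by (rule cauchy_schwarz)
  finally have "nrm (e \<xi>) * nrm (e \<xi>) \<le> nrm (y \<xi>) * nrm (e \<xi>)" by (simp add: power2_eq_square)
  then show ?thesis unfolding e_def[symmetric]
    by (cases "e \<xi> = 0") (auto simp: mult_le_cancel_right)
qed

lemma E_pos_bound:
  assumes vN: "vN_algebra (sm, ip) N" and NM: "N \<subseteq> M" and ce: "cond_exp (sm, ip) M N E"
    and a: "a \<in> M" and c: "c \<ge> 0" and im: "\<And>h. Im (ip (a h) h) = 0"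
    and ab: "\<And>h. cmod (ip (a h) h) \<le> c * (nrm h)^2"
  shows "cmod (ip (E a h) h) \<le> c * (nrm h)^2"
proof -
  define p1 where "p1 = op_add (op_smult (sm, ip) (of_real c) id) (op_smult (sm, ip) (-1) a)"
  define p2 where "p2 = op_add (op_smult (sm, ip) (of_real c) id) a"
  have idM: "id \<in> M" by (rule vN_id[OF vM])
  have idN: "id \<in> N" by (rule vN_id[OF vN])
  have p1M: "p1 \<in> M" unfolding p1_def by (intro vN_add[OF vM] vN_smult[OF vM] idM a)
  have p2M: "p2 \<in> M" unfolding p2_def by (intro vN_add[OF vM] vN_smult[OF vM] idM a)
  have ipp1: "ip (p1 v) v = of_real c * ip v v - ip (a v) v" for v
    by (simp add: p1_def op_add_def op_smult_def ip_simps)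
  have ipp2: "ip (p2 v) v = of_real c * ip v v + ip (a v) v" for v
    by (simp add: p2_def op_add_def op_smult_def ip_simps)
  have reb: "\<bar>Re (ip (a v) v)\<bar> \<le> c * (nrm v)^2" for v
    using ab[of v] abs_Re_le_cmod[of "ip (a v) v"] by linarith
  have pos1: "positive_op (sm, ip) p1"
    unfolding positive_op_def snd_conv
  proof (intro conjI allI)
    show "bop p1" using vN_bop[OF vM p1M] .
    fix h
    show "Im (ip (p1 h) h) = 0" by (simp add: ipp1 ip_self im)
    show "Re (ip (p1 h) h) \<ge> 0" using reb[of h] by (simp add: ipp1 ip_self abs_le_iff)
  qed
  have pos2: "positive_op (sm, ip) p2"
    unfolding positive_op_def snd_conv
  proof (intro conjI allI)
    show "bop p2" using vN_bop[OF vM p2M] .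
    fix h
    show "Im (ip (p2 h) h) = 0" by (simp add: ipp2 ip_self im)
    show "Re (ip (p2 h) h) \<ge> 0" using reb[of h] by (simp add: ipp2 ip_self abs_le_iff)
  qed
  have Ep1: "E p1 = op_add (op_smult (sm, ip) (of_real c) id) (op_smult (sm, ip) (-1) (E a))"
    unfolding p1_def
    by (simp add: ce_facts(3)[OF ce vN_smult[OF vM idM] vN_smult[OF vM a]] ce_facts(4)[OF ce idM]
        ce_facts(4)[OF ce a] ce_facts(2)[OF ce idN])
  have Ep2: "E p2 = op_add (op_smult (sm, ip) (of_real c) id) (E a)"
    unfolding p2_def
    by (simp add: ce_facts(3)[OF ce vN_smult[OF vM idM] a] ce_facts(4)[OF ce idM] ce_facts(2)[OF ce idN])
  have q1: "ip (E p1 v) v = of_real c * ip v v - ip (E a v) v" for v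
    by (simp add: Ep1 op_add_def op_smult_def ip_simps)
  have q2: "ip (E p2 v) v = of_real c * ip v v + ip (E a v) v" for v
    by (simp add: Ep2 op_add_def op_smult_def ip_simps)
  have P1: "Im (ip (E p1 h) h) = 0 \<and> Re (ip (E p1 h) h) \<ge> 0"
    using ce_facts(5)[OF ce p1M pos1] unfolding positive_op_def snd_conv by blast
  have P2: "Re (ip (E p2 h) h) \<ge> 0"
    using ce_facts(5)[OF ce p2M pos2] unfolding positive_op_def snd_conv by blast
  have I: "Im (ip (E a h) h) = 0" using P1 unfolding q1 by (simp add: ip_self)
  have R: "\<bar>Re (ip (E a h) h)\<bar> \<le> c * (nrm h)^2" using P1 P2 unfolding q1 q2 by (simp add: ip_self abs_le_iff)
  have "cmod (ip (E a h) h) = \<bar>Re (ip (E a h) h)\<bar>" using I by (simp add: cmod_def)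
  then show ?thesis using R by simp
qed

end


context stdf begin

lemma E_bound:
  assumes vN: "vN_algebra (sm, ip) N" and NM: "N \<subseteq> M" and ce: "cond_exp (sm, ip) M N E"
    and x: "x \<in> M" and cx: "cx \<ge> 0" and xb: "\<And>h. nrm (x h) \<le> cx * nrm h"
  shows "nrm (E x h) \<le> 8 * cx * nrm h"
proof -
  define xa where "xa = adjo x"
  have xaM: "xa \<in> M" unfolding xa_def by (rule vN_adj[OF vM x])
  have xa_cnj: "ip (xa v) v = cnj (ip (x v) v)" for v
    unfolding xa_def adj_left[OF mbop[OF x]] by (rule ip_cnj)
  define a where "a = op_smult (sm, ip) (1/2) (op_add x xa)"
  define b where "b = op_smult (sm, ip) (- \<i> / 2) (op_diff x xa)"
  have aM: "a \<in> M" unfolding a_def by (intro vN_smult[OF vM] vN_add[OF vM] x xaM)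
  have bM: "b \<in> M" unfolding b_def by (intro vN_smult[OF vM] vN_diff[OF vM] x xaM)
  have qa: "ip (a v) v = of_real (Re (ip (x v) v))" for v
    by (simp add: a_def op_smult_def op_add_def ip_simps xa_cnj complex_add_cnj)
  have qb: "ip (b v) v = of_real (Im (ip (x v) v))" for v
    by (simp add: b_def op_smult_def op_diff_def ip_simps xa_cnj complex_eq_iff)
  have qx: "cmod (ip (x v) v) \<le> cx * (nrm v)^2" for v
  proof -
    have "cmod (ip (x v) v) \<le> nrm (x v) * nrm v" by (rule cauchy_schwarz)
    also have "\<dots> \<le> (cx * nrm v) * nrm v" using xb by (simp add: mult_right_mono)
    finally show ?thesis by (simp add: power2_eq_square mult.assoc)
  qed
  have Ea: "cmod (ip (E a v) v) \<le> cx * (nrm v)^2" for v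
  proof (rule E_pos_bound[OF vN NM ce aM cx])
    show "Im (ip (a h) h) = 0" for h by (simp add: qa)
    show "cmod (ip (a h) h) \<le> cx * (nrm h)^2" for h
      using qx[of h] abs_Re_le_cmod[of "ip (x h) h"] by (simp add: qa)
  qed
  have Eb: "cmod (ip (E b v) v) \<le> cx * (nrm v)^2" for v
  proof (rule E_pos_bound[OF vN NM ce bM cx])
    show "Im (ip (b h) h) = 0" for h by (simp add: qb)
    show "cmod (ip (b h) h) \<le> cx * (nrm h)^2" for h
      using qx[of h] abs_Im_le_cmod[of "ip (x h) h"] by (simp add: qb)
  qed
  have Ea_eq: "E a = op_smult (sm, ip) (1/2) (op_add (E x) (E xa))"
    unfolding a_def by (simp add: ce_facts(4)[OF ce vN_add[OF vM x xaM]] ce_facts(3)[OF ce x xaM])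
  have Eb_eq: "E b = op_smult (sm, ip) (- \<i> / 2) (op_diff (E x) (E xa))"
    unfolding b_def by (simp add: ce_facts(4)[OF ce vN_diff[OF vM x xaM]] E_diff[OF ce x xaM])
  have dec: "ip (E x v) v = ip (E a v) v + \<i> * ip (E b v) v" for v
    by (simp add: Ea_eq Eb_eq op_smult_def op_add_def op_diff_def ip_simps algebra_simps)
  have qEx: "cmod (ip (E x v) v) \<le> (2 * cx) * (nrm v)^2" for v
  proof -
    have "cmod (ip (E x v) v) \<le> cmod (ip (E a v) v) + cmod (\<i> * ip (E b v) v)"
      unfolding dec by (rule norm_triangle_ineq)
    also have "\<dots> = cmod (ip (E a v) v) + cmod (ip (E b v) v)" by (simp add: norm_mult)
    finally show ?thesis using Ea[of v] Eb[of v] by simp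
  qed
  have ExN: "E x \<in> N" by (rule ce_facts(1)[OF ce x])
  have Eb: "bop (E x)" by (rule vN_bop[OF vN ExN])
  have "nrm (E x h) \<le> 4 * (2 * cx) * nrm h"
    by (rule polar_bound[OF bop_add[OF Eb] bop_sm[OF Eb] qEx]) (simp add: cx)
  then show ?thesis by simp
qed

end


context stdf begin

lemma final:
  assumes Ms: "\<And>k. vN_algebra (sm, ip) (Ms k) \<and> Ms k \<subseteq> M"
    and Ek: "\<And>k. cond_exp (sm, ip) M (Ms k) (E k) \<and> trace_preserving M \<tau> (E k)"
    and x: "x \<in> liminf_alg (sm, ip) Ms"
  shows "strong_star_lim (sm, ip) (\<lambda>k. E k x) x"
proof -
  have vN: "\<And>k. vN_algebra (sm, ip) (Ms k)" and NM: "\<And>k. Ms k \<subseteq> M" using Ms by auto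
  have ce: "\<And>k. cond_exp (sm, ip) M (Ms k) (E k)" and tp: "\<And>k. trace_preserving M \<tau> (E k)"
    using Ek by auto
  have xb: "bop x" using x by (simp add: liminf_alg_def)
  obtain X where XN: "\<And>k. X k \<in> Ms k" and Xl: "strong_star_lim (sm, ip) X x"
    using x by (auto simp: liminf_alg_def)
  have Xlim: "\<And>h. (\<lambda>k. nrm (X k h - x h)) \<longlonglongrightarrow> 0" using Xl by (simp add: strong_star_lim_def)
  have XM: "\<And>k. X k \<in> M" using XN NM by blast
  have xM: "x \<in> M"
  proof -
    have "x \<in> commutant (sm, ip) (commutant (sm, ip) M)"
      unfolding commutant_def[of _ "commutant (sm, ip) M"]
    proof (intro CollectI conjI ballI)
      show "bop x" by (rule xb)
      fix y assume y: "y \<in> commutant (sm, ip) M"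
      have yb: "bop y" and yc: "\<And>m. m \<in> M \<Longrightarrow> m \<circ> y = y \<circ> m" using y by (auto simp: commutant_def)
      obtain Cy where Cy: "Cy \<ge> 0" "\<And>h. nrm (y h) \<le> Cy * nrm h" using bop_bound[OF yb] by blast
      show "y \<circ> x = x \<circ> y"
      proof
        fix h
        have "nrm (y (x h) - x (y h)) \<le> 0"
        proof (rule LIMSEQ_le_const)
          show "(\<lambda>k. Cy * nrm (X k h - x h) + nrm (X k (y h) - x (y h))) \<longlonglongrightarrow> 0"
            using tendsto_add[OF tendsto_mult_right_zero[OF Xlim[of h]] Xlim[of "y h"]] by simp
          show "\<exists>N. \<forall>k\<ge>N. nrm (y (x h) - x (y h)) \<le> Cy * nrm (X k h - x h) + nrm (X k (y h) - x (y h))"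
          proof (intro exI allI impI)
            fix k
            have c: "y (X k h) = X k (y h)" using yc[OF XM[of k]] by (metis comp_apply)
            have "y (x h) - x (y h) = y (x h - X k h) + (X k (y h) - x (y h))"
              using c by (simp add: bop_diff[OF yb])
            then have "nrm (y (x h) - x (y h)) \<le> nrm (y (x h - X k h)) + nrm (X k (y h) - x (y h))"
              using nrm_triangle by metis
            also have "nrm (y (x h - X k h)) \<le> Cy * nrm (X k h - x h)"
              using Cy(2)[of "x h - X k h"] nrm_commute[of "x h" "X k h"] by simp
            finally show "nrm (y (x h) - x (y h)) \<le> Cy * nrm (X k h - x h) + nrm (X k (y h) - x (y h))"
              by simp
          qed
        qed
        then have "nrm (y (x h) - x (y h)) = 0" using nrm_nonneg[of "y (x h) - x (y h)"] by linarith
        then show "(y \<circ> x) h = (x \<circ> y) h" by simp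
      qed
    qed
    then show ?thesis using vM by (simp add: vN_algebra_def)
  qed
  define z where "z k = op_diff (E k x) x" for k
  have ExN: "E k x \<in> Ms k" for k by (rule ce_facts(1)[OF ce xM])
  have ExM: "E k x \<in> M" for k using ExN NM by blast
  have zM: "z k \<in> M" for k unfolding z_def by (rule vN_diff[OF vM ExM xM])
  obtain cx where cx: "cx \<ge> 0" "\<And>h. nrm (x h) \<le> cx * nrm h" using bop_bound[OF xb] by blast
  have zb: "nrm (z k h) \<le> (9 * cx) * nrm h" for k h
  proof -
    have "nrm (z k h) \<le> nrm (E k x h) + nrm (x h)" unfolding z_def op_diff_def by (rule nrm_diff_le)
    also have "\<dots> \<le> 8 * cx * nrm h + cx * nrm h"
      using E_bound[OF vN NM ce xM cx] cx(2)[of h] by (intro add_mono) auto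
    finally show ?thesis by simp
  qed
  have zab: "nrm (adjo (z k) h) \<le> (9 * cx) * nrm h" for k h
    by (rule adj_bound[OF mbop[OF zM]]) (use cx zb in auto)
  have zxi: "nrm (z k \<xi>) \<le> 2 * nrm (X k \<xi> - x \<xi>)" for k
  proof -
    define w where "w = op_diff x (X k)"
    have wM: "w \<in> M" unfolding w_def by (rule vN_diff[OF vM xM XM])
    have Ew: "E k w = op_diff (E k x) (X k)"
      unfolding w_def E_diff[OF ce xM XM] ce_facts(2)[OF ce XN] ..
    have "z k \<xi> = E k w \<xi> - w \<xi>" unfolding Ew unfolding w_def z_def op_diff_def by simp
    then have "nrm (z k \<xi>) \<le> nrm (E k w \<xi>) + nrm (w \<xi>)" using nrm_diff_le by simp
    also have "\<dots> \<le> 2 * nrm (w \<xi>)" using E_2norm[OF vN NM ce tp wM] by simp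
    also have "nrm (w \<xi>) = nrm (X k \<xi> - x \<xi>)" unfolding w_def op_diff_def by (rule nrm_commute)
    finally show ?thesis by simp
  qed
  have zl: "(\<lambda>k. nrm (z k \<xi>)) \<longlonglongrightarrow> 0"
  proof (rule tendsto_sandwich)
    show "\<forall>\<^sub>F k in sequentially. 0 \<le> nrm (z k \<xi>)" by simp
    show "\<forall>\<^sub>F k in sequentially. nrm (z k \<xi>) \<le> 2 * nrm (X k \<xi> - x \<xi>)" using zxi by simp
    show "(\<lambda>k. 0) \<longlonglongrightarrow> (0::real)" by simp
    show "(\<lambda>k. 2 * nrm (X k \<xi> - x \<xi>)) \<longlonglongrightarrow> 0" using tendsto_mult_right_zero[OF Xlim[of \<xi>]] by simp
  qed
  have zal: "(\<lambda>k. nrm (adjo (z k) \<xi>)) \<longlonglongrightarrow> 0" using zl trace_norm[OF zM] by simp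
  have c9: "9 * cx \<ge> 0" using cx by simp
  have L1: "(\<lambda>k. nrm (z k h)) \<longlonglongrightarrow> 0" for h by (rule conv1[OF zM c9 zb zal])
  have L2: "(\<lambda>k. nrm (adjo (z k) h)) \<longlonglongrightarrow> 0" for h
  proof (rule conv1[where Z = "\<lambda>k. adjo (z k)", OF vN_adj[OF vM zM] c9 zab])
    show "(\<lambda>k. nrm (adjo (adjo (z k)) \<xi>)) \<longlonglongrightarrow> 0" using zl adj_adj[OF mbop[OF zM]] by simp
  qed
  have az: "adjo (z k) = op_diff (adjo (E k x)) (adjo x)" for k
    unfolding z_def by (rule adj_diff[OF mbop[OF ExM] xb])
  show ?thesis unfolding strong_star_lim_def
  proof (intro allI conjI)
    fix h
    show "(\<lambda>k. nrm (E k x h - x h)) \<longlonglongrightarrow> 0" using L1[of h] by (simp add: z_def op_diff_def)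
    show "(\<lambda>k. nrm (adjo (E k x) h - adjo x h)) \<longlonglongrightarrow> 0" using L2[of h] by (simp add: az op_diff_def)
  qed
qed

end

theorem lemma3p2:
  fixes S :: "('h::ab_group_add) hsp"
    and M :: "('h \<Rightarrow> 'h) set"
    and \<tau> :: "('h \<Rightarrow> 'h) \<Rightarrow> complex"
    and Ms :: "nat \<Rightarrow> ('h \<Rightarrow> 'h) set"
    and E :: "nat \<Rightarrow> ('h \<Rightarrow> 'h) \<Rightarrow> ('h \<Rightarrow> 'h)"
    and x :: "'h \<Rightarrow> 'h"
  assumes "hilbert_space S"
    and "separable_hs S"
    and "II1_factor S M"
    and "state S M \<tau>" and "tracial S M \<tau>" and "faithful S M \<tau>" and "normal_functional S M \<tau>"
    and "acts_standardly S M \<tau>"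
    and "\<And>k. vN_algebra S (Ms k) \<and> Ms k \<subseteq> M"
    and "\<And>k. cond_exp S M (Ms k) (E k) \<and> normal_map S M (E k) \<and> trace_preserving M \<tau> (E k)"
    and "x \<in> liminf_alg S Ms"
  shows "strong_star_lim S (\<lambda>k. E k x) x"
proof -
  obtain sm ip where S: "S = (sm, ip)" by (cases S)
  have H: "hilbert_space (sm, ip)" using assms(1) S by simp
  have hs: "hspace sm ip"
    using H unfolding hilbert_space_def Let_def fst_conv snd_conv hspace_def
    by (elim conjE, intro conjI) blast+
  obtain \<xi> where xi: "hnorm (sm, ip) \<xi> = 1" "\<forall>h. \<forall>e>0. \<exists>m\<in>M. hnorm (sm, ip) (m \<xi> - h) < e"
    "\<forall>m\<in>M. \<tau> m = ip (m \<xi>) \<xi>"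
    using assms(8) S unfolding acts_standardly_def by auto
  have vM: "vN_algebra (sm, ip) M" using assms(3) S by (simp add: II1_factor_def)
  have st: "stdf sm ip M \<tau> \<xi>"
    unfolding stdf_def stdf_axioms_def using hs vM assms(5) S xi by auto
  have Ms: "\<And>k. vN_algebra (sm, ip) (Ms k) \<and> Ms k \<subseteq> M" using assms(9) S by simp
  have Ek: "\<And>k. cond_exp (sm, ip) M (Ms k) (E k) \<and> trace_preserving M \<tau> (E k)"
    using assms(10) S by simp
  have x: "x \<in> liminf_alg (sm, ip) Ms" using assms(11) S by simp
  show ?thesis using stdf.final[OF st Ms Ek x] S by simp
qed

end
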